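(* Let $n\geq 1$ and, for $i\in\{1,\ldots,n+1\}$, let $\mathrm{os}_i\colon[0,1]^n\to\mathbb{R}$ be the $i$th order statistic function for $i\le n$ and $\mathrm{os}_{n+1}\equiv 1$. Let $M$ be the square matrix of order $n+1$ with entries $(M)_{ij}=\int_{[0,1]^n}\mathrm{os}_i(\mathbf{x})\,\mathrm{os}_j(\mathbf{x})\,d\mathbf{x}$ for $i,j\in\{1,\ldots,n+1\}$. Then for all $i,j\in\{1,\ldots,n+1\}$, $$(M)_{ij}=\frac{\min(i,j)\,\big(\max(i,j)+1\big)}{(n+1)(n+2)},$$ $M$ is invertible, and $$\frac{(M^{-1})_{ij}}{(n+1)(n+2)}=\begin{cases}2, & \text{if } i=j<n+1,\\ \frac{n+1}{n+2}, & \text{if } i=j=n+1,\\ -1, & \text{if } |i-j|=1,\\ 0, & \text{otherwise.}\end{cases}$$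
   Context: For $\mathbf{x}=(x_1,\ldots,x_n)\in[0,1]^n$, let $x_{(1)}\le\cdots\le x_{(n)}$ be the coordinates rearranged in ascending order; the $k$th order statistic function is $\mathrm{os}_k(\mathbf{x})=x_{(k)}$ for $k\in\{1,\ldots,n\}$. The integrals are with respect to Lebesgue measure. *)

theory Defs
  imports "HOL-Analysis.Analysis" "Jordan_Normal_Form.Matrix"
begin

text \<open>Points of [0,1]^n are functions x :: nat => real on the index set {..<n}
  (coordinates x 0, ..., x (n-1)).  The k-th order statistic (1-based k)
  is the k-th smallest coordinate.\<close>
definition os :: "nat \<Rightarrow> nat \<Rightarrow> (nat \<Rightarrow> real) \<Rightarrow> real" where
  "os n k x = sort (map x [0..<n]) ! (k - 1)"

definition os_ext :: "nat \<Rightarrow> nat \<Rightarrow> (nat \<Rightarrow> real) \<Rightarrow> real" where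
  "os_ext n i x = (if i \<le> n then os n i x else 1)"

abbreviation lebesgue_n :: "nat \<Rightarrow> (nat \<Rightarrow> real) measure" where
  "lebesgue_n n \<equiv> PiM {..<n} (\<lambda>_. lborel)"

abbreviation unit_cube :: "nat \<Rightarrow> (nat \<Rightarrow> real) set" where
  "unit_cube n \<equiv> PiE {..<n} (\<lambda>_. {0..1})"

text \<open>The (n+1)x(n+1) moment matrix; JNF indices are 0-based, so entry (i,j)
  corresponds to the paper's (i+1,j+1).\<close>
definition os_moment_mat :: "nat \<Rightarrow> real mat" where
  "os_moment_mat n = mat (n+1) (n+1)
     (\<lambda>(i,j). \<integral>x\<in>unit_cube n. os_ext n (i+1) x * os_ext n (j+1) x \<partial>lebesgue_n n)"

end

theory Submission
  imports Defs "Jordan_Normal_Form.Determinant"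
begin

lemma sort_snoc: "sort (xs @ [y::real]) = insort y (sort xs)"
  by (rule properties_for_sort) (auto simp: sorted_insort)

lemma sort_map_Suc: "sort (map (x::nat\<Rightarrow>real) [0..<Suc n]) = insort (x n) (sort (map x [0..<n]))"
  by (simp add: sort_snoc)

lemma sorted_ge_hd: "sorted (a # s) \<Longrightarrow> i < length (a # s) \<Longrightarrow> a \<le> (a#s) ! i"
  by (metis sorted_nth_mono le0 nth_Cons_0)

lemma insort_nth:
  fixes s :: "real list"
  assumes "sorted s" "j \<le> length s"
  shows "insort y s ! j = (if s = [] then y else if j = 0 then min y (s!0)
           else if j = length s then max (s!(j-1)) y else max (s!(j-1)) (min y (s!j)))"
  using assms
proof (induction s arbitrary: j)
  case Nil
  then show ?case by simp
next
  case (Cons a s)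
  have srt: "sorted s" using Cons.prems by simp
  have ge: "\<And>i. i < length (a#s) \<Longrightarrow> a \<le> (a#s) ! i" using Cons.prems sorted_ge_hd by blast
  show ?case
  proof (cases "y \<le> a")
    case True
    then have ins: "insort y (a#s) = y # a # s" by simp
    show ?thesis
    proof (cases j)
      case 0 then show ?thesis using ins True by simp
    next
      case (Suc j')
      have "a \<le> (a#s) ! j'" using ge Suc Cons.prems by simp
      then show ?thesis using ins True Suc Cons.prems by (auto simp: min_def max_def)
    qed
  next
    case False
    then have ins: "insort y (a#s) = a # insort y s" by simp
    show ?thesis
    proof (cases j)
      case 0 then show ?thesis using ins False by simp
    next
      case (Suc j')
      have IH: "insort y s ! j' = (if s = [] then y else if j' = 0 then min y (s!0)
           else if j' = length s then max (s!(j'-1)) y else max (s!(j'-1)) (min y (s!j')))"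
        using Cons.IH[OF srt] Suc Cons.prems by simp
      show ?thesis
      proof (cases "s = []")
        case True then show ?thesis using ins False Suc Cons.prems by auto
      next
        case ne: False
        show ?thesis
        proof (cases j')
          case 0
          have "a \<le> s ! 0" using ge[of 1] ne by simp
          then show ?thesis using ins False Suc 0 IH ne by (auto simp: min_def max_def)
        next
          case (Suc j'')
          then show ?thesis using ins False \<open>j = Suc j'\<close> IH ne by auto
        qed
      qed
    qed
  qed
qed

definition oext :: "real list \<Rightarrow> nat \<Rightarrow> real" where
  "oext s k = (if k = 0 then 0 else if k \<le> length s then s!(k-1) else 1)"

lemma ext_insort:
  fixes s :: "real list"
  assumes "sorted s" "set s \<subseteq> {0..1}" "0 \<le> y" "y \<le> 1" "1 \<le> k" "k \<le> length s + 1"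
  shows "oext (insort y s) k = max (oext s (k-1)) (min y (oext s k))"
proof -
  obtain j where kj: "k = Suc j" using assms(5) by (cases k) auto
  have jl: "j \<le> length s" using assms kj by simp
  have len: "length (insort y s) = Suc (length s)" by simp
  have e: "oext (insort y s) k = insort y s ! j"
  proof -
    have "k \<le> length (insort y s)" using assms(6) by simp
    then show ?thesis using kj by (simp add: oext_def)
  qed
  have I: "insort y s ! j = (if s = [] then y else if j = 0 then min y (s!0)
           else if j = length s then max (s!(j-1)) y else max (s!(j-1)) (min y (s!j)))"
    by (rule insort_nth[OF assms(1) jl])
  have nth: "i < length s \<Longrightarrow> s!i \<in> {0..1}" for i using assms(2) nth_mem[of i s] by blast
  show ?thesis
  proof (cases "s = []")
    case True
    then have "j = 0" using jl by simp
    then show ?thesis unfolding e I using True kj assms by (simp add: oext_def)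
  next
    case ne: False
    show ?thesis
    proof (cases "j = 0")
      case True
      have "s!0 \<in> {0..1}" using nth ne by simp
      then have "0 \<le> min y (s ! 0)" using assms by simp
      moreover have "oext s k = s!0" using kj True ne by (cases s) (auto simp: oext_def)
      moreover have "oext s (k-1) = 0" using kj True by (simp add: oext_def)
      ultimately show ?thesis unfolding e I using True ne by (simp add: max_absorb2)
    next
      case j0: False
      have a: "oext s (k-1) = s!(j-1)" using kj j0 jl by (simp add: oext_def)
      show ?thesis
      proof (cases "j = length s")
        case True
        have "oext s k = 1" using kj True by (simp add: oext_def)
        moreover have "min y 1 = y" using assms by simp
        ultimately show ?thesis unfolding e I a using True j0 ne by simp
      next
        case False
        have "oext s k = s!j" using kj False jl by (simp add: oext_def)
        then show ?thesis unfolding e I a using False j0 ne by simp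
      qed
    qed
  qed
qed

lemma ext_bounds: assumes "set s \<subseteq> {0..1}" shows "0 \<le> oext s k \<and> oext s k \<le> 1"
proof (cases "k = 0 \<or> length s < k")
  case True then show ?thesis by (auto simp: oext_def)
next
  case False
  then have "k - 1 < length s" by auto
  then have "s!(k-1) \<in> set s" by (rule nth_mem)
  then have "s!(k-1) \<in> {0..1}" using assms by blast
  moreover have "oext s k = s!(k-1)" using False by (simp add: oext_def)
  ultimately show ?thesis by simp
qed

lemma ext_mono:
  assumes "sorted s" "set s \<subseteq> {0..1}" "k \<le> l" shows "oext s k \<le> oext s l"
proof -
  have b: "0 \<le> oext s l" "oext s k \<le> 1" using ext_bounds[OF assms(2)] by auto
  show ?thesis
  proof (cases "k = 0")
    case True
    then have "oext s k = 0" by (simp add: oext_def)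
    then show ?thesis using b by simp
  next
    case k0: False
    show ?thesis
    proof (cases "length s < l")
      case True
      then have "oext s l = 1" using assms(3) k0 by (simp add: oext_def)
      then show ?thesis using b by simp
    next
      case False
      then have kl: "k - 1 \<le> l - 1" "l - 1 < length s" using assms(3) k0 by auto
      have "s ! (k-1) \<le> s ! (l-1)" by (rule sorted_nth_mono[OF assms(1) kl])
      moreover have "oext s k = s ! (k-1)" using False assms(3) k0 by (simp add: oext_def)
      moreover have "oext s l = s ! (l-1)" using False assms(3) k0 by (simp add: oext_def)
      ultimately show ?thesis by simp
    qed
  qed
qed


definition X :: "nat \<Rightarrow> nat \<Rightarrow> (nat \<Rightarrow> real) \<Rightarrow> real" where
  "X n k x = oext (sort (map x [0..<n])) k"

lemma meas_sortnth:
  "j < n \<Longrightarrow> {..<n} \<subseteq> I \<Longrightarrow> (\<lambda>x::nat\<Rightarrow>real. sort (map x [0..<n]) ! j) \<in> borel_measurable (PiM I (\<lambda>_. lborel))"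
proof (induction n arbitrary: j)
  case 0 then have False by simp then show ?case ..
next
  case (Suc n)
  have nI: "n \<in> I" using Suc.prems by auto
  have cn: "(\<lambda>x. x n) \<in> borel_measurable (PiM I (\<lambda>_. lborel))"
    using measurable_component_singleton[OF nI, of "\<lambda>_. lborel"] by simp
  have sub: "{..<n} \<subseteq> I" using Suc.prems(2) by auto
  have IH: "j' < n \<Longrightarrow> (\<lambda>x::nat\<Rightarrow>real. sort (map x [0..<n]) ! j') \<in> borel_measurable (PiM I (\<lambda>_. lborel))" for j'
    by (rule Suc.IH[OF _ sub])
  let ?s = "\<lambda>x::nat\<Rightarrow>real. sort (map x [0..<n])"
  have eq: "sort (map (x::nat\<Rightarrow>real) [0..<Suc n]) ! j = (if n = 0 then x n else if j = 0 then min (x n) (?s x ! 0)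
     else if j = n then max (?s x ! (j-1)) (x n)
     else max (?s x ! (j-1)) (min (x n) (?s x ! j)))" for x
  proof -
    have "sorted (?s x)" by simp
    moreover have "j \<le> length (?s x)" using Suc.prems by simp
    ultimately have "insort (x n) (?s x) ! j = (if ?s x = [] then x n else if j = 0 then min (x n) (?s x!0)
           else if j = length (?s x) then max (?s x!(j-1)) (x n) else max (?s x!(j-1)) (min (x n) (?s x!j)))"
      by (rule insort_nth)
    moreover have ln: "length (?s x) = n" by simp
    moreover have "(?s x = []) = (n = 0)" using ln by (metis length_0_conv)
    ultimately show ?thesis by (simp only: sort_map_Suc)
  qed
  show ?case
  proof (cases "n = 0")
    case True
    then show ?thesis unfolding eq using cn by simp
  next
    case n0: False
    show ?thesis
    proof (cases "j = 0")
      case True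
      then have "(\<lambda>x. min (x n) (?s x ! 0)) \<in> borel_measurable (PiM I (\<lambda>_. lborel))"
        using n0 by (intro borel_measurable_min cn IH) simp
      then show ?thesis unfolding eq using n0 True by simp
    next
      case j0: False
      show ?thesis
      proof (cases "j = n")
        case True
        then have "(\<lambda>x. max (?s x ! (j-1)) (x n)) \<in> borel_measurable (PiM I (\<lambda>_. lborel))"
          using n0 by (intro borel_measurable_max cn IH) simp
        then show ?thesis unfolding eq using n0 j0 True by simp
      next
        case False
        then have "j < n" using Suc.prems by simp
        then have "(\<lambda>x. max (?s x ! (j-1)) (min (x n) (?s x ! j))) \<in> borel_measurable (PiM I (\<lambda>_. lborel))"
          using n0 by (intro borel_measurable_max borel_measurable_min cn IH) simp_all
        then show ?thesis unfolding eq using n0 j0 False by simp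
      qed
    qed
  qed
qed

lemma meas_X:
  assumes a: "{..<n} \<subseteq> I" shows "X n k \<in> borel_measurable (PiM I (\<lambda>_. lborel))"
proof (cases "k = 0")
  case True
  then have "X n k = (\<lambda>x. 0)" by (simp add: X_def oext_def fun_eq_iff)
  then show ?thesis by simp
next
  case k0: False
  show ?thesis
  proof (cases "k \<le> n")
    case False
    then have "X n k = (\<lambda>x. 1)" using k0 by (simp add: X_def oext_def fun_eq_iff)
    then show ?thesis by simp
  next
    case True
    then have "X n k = (\<lambda>x. sort (map x [0..<n]) ! (k-1))" using k0 by (simp add: X_def oext_def fun_eq_iff)
    moreover have "k - 1 < n" using True k0 by arith
    ultimately show ?thesis using meas_sortnth[OF _ a, of "k-1"] by simp
  qed
qed


lemma pow_has_integral:
  fixes u w :: real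
  assumes "u \<le> w"
  shows "((\<lambda>y. y^r) has_integral (w^Suc r - u^Suc r)/real (Suc r)) {u..w}"
proof -
  have d: "((\<lambda>y. y^(Suc r)/real (Suc r)) has_vector_derivative y^r) (at y within {u..w})" for y
  proof -
    have "((\<lambda>y. y^(Suc r)/real (Suc r)) has_real_derivative (real (Suc r) * y^r)/real (Suc r)) (at y within {u..w})"
      by (intro derivative_eq_intros) auto
    then show ?thesis by (simp add: has_real_derivative_iff_has_vector_derivative)
  qed
  have "((\<lambda>y. y^r) has_integral (w^(Suc r)/real (Suc r) - u^(Suc r)/real (Suc r))) {u..w}"
    by (rule fundamental_theorem_of_calculus[OF assms d])
  then show ?thesis by (simp add: diff_divide_distrib)
qed

lemma const_has_integral:
  fixes u w :: real
  assumes "u \<le> w"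
  shows "((\<lambda>y. c) has_integral (w - u) * c) {u..w}"
  using has_integral_const_real[of c u w] assms by simp

lemma const_has_integral':
  fixes u w :: real
  assumes "u \<le> w" "V = (w - u) * c"
  shows "((\<lambda>y. c) has_integral V) {u..w}"
  using const_has_integral[OF assms(1)] assms(2) by simp

lemma hi_cong:
  assumes "(f has_integral V) S" "\<And>y. y \<in> S \<Longrightarrow> f y = g y" "V = W"
  shows "(g has_integral W) S"
  using has_integral_cong[of S f g V] assms by blast

lemma clamp1_has_integral:
  fixes a b :: real
  assumes "0 \<le> a" "a \<le> b" "b \<le> 1"
  shows "((\<lambda>y. (max a (min y b))^r) has_integral
           (a^Suc r + (b^Suc r - a^Suc r)/real (Suc r) + b^r*(1-b))) {0..1}"
proof -
  let ?g = "\<lambda>y::real. (max a (min y b))^r"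
  have i1: "(?g has_integral a^Suc r) {0..a}"
  proof -
    have h: "((\<lambda>y. a^r) has_integral a^Suc r) {0..a}" by (rule const_has_integral') (use assms in auto)
    moreover have e: "\<And>y. y \<in> {0..a} \<Longrightarrow> a^r = ?g y" using assms by auto
    show ?thesis by (rule has_integral_eq[OF _ h]) (rule e)
  qed
  have i2: "(?g has_integral (b^Suc r - a^Suc r)/real (Suc r)) {a..b}"
  proof -
    have h: "((\<lambda>y. y^r) has_integral (b^Suc r - a^Suc r)/real (Suc r)) {a..b}" by (rule pow_has_integral) (use assms in auto)
    moreover have e: "\<And>y. y \<in> {a..b} \<Longrightarrow> y^r = ?g y" using assms by auto
    show ?thesis by (rule has_integral_eq[OF _ h]) (rule e)
  qed
  have i3: "(?g has_integral b^r*(1-b)) {b..1}"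
  proof -
    have h: "((\<lambda>y. b^r) has_integral b^r*(1-b)) {b..1}" by (rule const_has_integral') (use assms in auto)
    moreover have e: "\<And>y. y \<in> {b..1} \<Longrightarrow> b^r = ?g y" using assms by auto
    show ?thesis by (rule has_integral_eq[OF _ h]) (rule e)
  qed
  have j: "(?g has_integral a^Suc r + (b^Suc r - a^Suc r)/real (Suc r)) {0..b}"
    by (rule has_integral_combine[OF _ _ i1 i2]) (use assms in auto)
  show ?thesis
    by (rule has_integral_combine[OF _ _ j i3]) (use assms in auto)
qed

lemma clamp2_has_integral:
  fixes a b c d :: real
  assumes "0 \<le> a" "a \<le> b" "b \<le> c" "c \<le> d" "d \<le> 1"
  shows "((\<lambda>y. (max a (min y b))^p * (max c (min y d))^q) has_integral
           (a^Suc p*c^q + c^q*((b^Suc p - a^Suc p)/real (Suc p)) + b^p*c^q*(c-b)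
            + b^p*((d^Suc q - c^Suc q)/real (Suc q)) + b^p*d^q*(1-d))) {0..1}"
proof -
  let ?g = "\<lambda>y::real. (max a (min y b))^p * (max c (min y d))^q"
  have i1: "(?g has_integral a^Suc p*c^q) {0..a}"
  proof -
    have h: "((\<lambda>y. a^p*c^q) has_integral a^Suc p*c^q) {0..a}" by (rule const_has_integral') (use assms in auto)
    moreover have e: "\<And>y. y \<in> {0..a} \<Longrightarrow> a^p*c^q = ?g y" using assms by auto
    show ?thesis by (rule has_integral_eq[OF _ h]) (rule e)
  qed
  have i2: "(?g has_integral c^q*((b^Suc p - a^Suc p)/real (Suc p))) {a..b}"
  proof -
    have h: "((\<lambda>y. c^q * y^p) has_integral c^q*((b^Suc p - a^Suc p)/real (Suc p))) {a..b}"
      by (rule has_integral_mult_right, rule pow_has_integral) (use assms in auto)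
    moreover have e: "\<And>y. y \<in> {a..b} \<Longrightarrow> c^q * y^p = ?g y" using assms by auto
    show ?thesis by (rule has_integral_eq[OF _ h]) (rule e)
  qed
  have i3: "(?g has_integral b^p*c^q*(c-b)) {b..c}"
  proof -
    have h: "((\<lambda>y. b^p*c^q) has_integral b^p*c^q*(c-b)) {b..c}" by (rule const_has_integral') (use assms in auto)
    moreover have e: "\<And>y. y \<in> {b..c} \<Longrightarrow> b^p*c^q = ?g y" using assms by auto
    show ?thesis by (rule has_integral_eq[OF _ h]) (rule e)
  qed
  have i4: "(?g has_integral b^p*((d^Suc q - c^Suc q)/real (Suc q))) {c..d}"
  proof -
    have h: "((\<lambda>y. b^p * y^q) has_integral b^p*((d^Suc q - c^Suc q)/real (Suc q))) {c..d}"
      by (rule has_integral_mult_right, rule pow_has_integral) (use assms in auto)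
    moreover have e: "\<And>y. y \<in> {c..d} \<Longrightarrow> b^p * y^q = ?g y" using assms by auto
    show ?thesis by (rule has_integral_eq[OF _ h]) (rule e)
  qed
  have i5: "(?g has_integral b^p*d^q*(1-d)) {d..1}"
  proof -
    have h: "((\<lambda>y. b^p*d^q) has_integral b^p*d^q*(1-d)) {d..1}" by (rule const_has_integral') (use assms in auto)
    moreover have e: "\<And>y. y \<in> {d..1} \<Longrightarrow> b^p*d^q = ?g y" using assms by auto
    show ?thesis by (rule has_integral_eq[OF _ h]) (rule e)
  qed
  have j2: "(?g has_integral a^Suc p*c^q + c^q*((b^Suc p - a^Suc p)/real (Suc p))) {0..b}"
    by (rule has_integral_combine[OF _ _ i1 i2]) (use assms in auto)
  have j3: "(?g has_integral a^Suc p*c^q + c^q*((b^Suc p - a^Suc p)/real (Suc p)) + b^p*c^q*(c-b)) {0..c}"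
    by (rule has_integral_combine[OF _ _ j2 i3]) (use assms in auto)
  have j4: "(?g has_integral a^Suc p*c^q + c^q*((b^Suc p - a^Suc p)/real (Suc p)) + b^p*c^q*(c-b)
            + b^p*((d^Suc q - c^Suc q)/real (Suc q))) {0..d}"
    by (rule has_integral_combine[OF _ _ j3 i4]) (use assms in auto)
  show ?thesis
    by (rule has_integral_combine[OF _ _ j4 i5]) (use assms in auto)
qed

lemma lborel_Icc_integral:
  fixes g :: "real \<Rightarrow> real"
  assumes "(g has_integral V) {0..1}" "continuous_on {0..1} g"
  shows "(\<integral>y. indicator {0..1} y * g y \<partial>lborel) = V"
proof -
  have si: "set_integrable lborel {0..1} g"
    unfolding set_integrable_def by (rule borel_integrable_compact) (use assms in auto)
  have "(LINT y:{0..1}|lborel. g y) = integral {0..1} g"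
    by (rule set_borel_integral_eq_integral(2)[OF si])
  also have "\<dots> = V" using assms(1) by (rule integral_unique)
  finally show ?thesis by (simp add: set_lebesgue_integral_def)
qed

lemma clamp1_integral:
  fixes a b :: real
  assumes "0 \<le> a" "a \<le> b" "b \<le> 1"
  shows "(\<integral>y. indicator {0..1} y * (max a (min y b))^r \<partial>lborel) =
           a^Suc r + (b^Suc r - a^Suc r)/real (Suc r) + b^r*(1-b)"
  by (rule lborel_Icc_integral[OF clamp1_has_integral[OF assms]]) (intro continuous_intros)

lemma clamp2_integral:
  fixes a b c d :: real
  assumes "0 \<le> a" "a \<le> b" "b \<le> c" "c \<le> d" "d \<le> 1"
  shows "(\<integral>y. indicator {0..1} y * ((max a (min y b))^p * (max c (min y d))^q) \<partial>lborel) =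
           a^Suc p*c^q + c^q*((b^Suc p - a^Suc p)/real (Suc p)) + b^p*c^q*(c-b)
            + b^p*((d^Suc q - c^Suc q)/real (Suc q)) + b^p*d^q*(1-d)"
  by (rule lborel_Icc_integral[OF clamp2_has_integral[OF assms]]) (intro continuous_intros)


lemma cube_sets: "unit_cube n \<in> sets (lebesgue_n n)"
  by (rule sets_PiM_I_finite) auto

lemma cube_emeasure: "emeasure (lebesgue_n n) (unit_cube n) = 1"
proof -
  interpret product_sigma_finite "\<lambda>_::nat. lborel :: real measure" by standard
  have "emeasure (lebesgue_n n) (unit_cube n) = (\<Prod>i\<in>{..<n}. emeasure lborel {0..1::real})"
    by (rule emeasure_PiM) auto
  then show ?thesis by simp
qed

lemma cube_measure: "measure (lebesgue_n n) (unit_cube n) = 1"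
  using cube_emeasure by (simp add: measure_def)

lemma int_bound:
  fixes g :: "(nat \<Rightarrow> real) \<Rightarrow> real"
  assumes gm: "g \<in> borel_measurable (lebesgue_n n)"
    and gb: "\<And>x. x \<in> unit_cube n \<Longrightarrow> \<bar>g x\<bar> \<le> B"
  shows "integrable (lebesgue_n n) (\<lambda>x. indicator (unit_cube n) x * g x)"
proof (rule Bochner_Integration.integrable_bound)
  show "integrable (lebesgue_n n) (\<lambda>x. B * indicator (unit_cube n) x)"
    using cube_sets cube_emeasure by (intro integrable_mult_right integrable_real_indicator) auto
  show "(\<lambda>x. indicator (unit_cube n) x * g x) \<in> borel_measurable (lebesgue_n n)"
    using cube_sets gm by (intro borel_measurable_times borel_measurable_indicator) auto
  show "AE x in lebesgue_n n. norm (indicator (unit_cube n) x * g x) \<le> norm (B * indicator (unit_cube n) x)"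
  proof (rule AE_I2)
    fix x
    show "norm (indicator (unit_cube n) x * g x) \<le> norm (B * indicator (unit_cube n) x)"
    proof (cases "x \<in> unit_cube n")
      case True
      then show ?thesis using gb[OF True] by (simp add: indicator_def)
    qed (simp add: indicator_def)
  qed
qed

lemma set_sort_cube:
  assumes "x \<in> unit_cube n"
  shows "set (sort (map x [0..<n])) \<subseteq> {0..1}"
  using assms by (auto simp: PiE_iff)

lemma X_bounds: "x \<in> unit_cube n \<Longrightarrow> 0 \<le> X n k x \<and> X n k x \<le> 1"
  unfolding X_def by (rule ext_bounds[OF set_sort_cube])

lemma X_mono: "x \<in> unit_cube n \<Longrightarrow> k \<le> l \<Longrightarrow> X n k x \<le> X n l x"
  unfolding X_def by (rule ext_mono[OF sorted_sort set_sort_cube])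

lemma X_upd:
  assumes x: "x \<in> unit_cube n" and y: "0 \<le> y" "y \<le> 1" and k: "1 \<le> k" "k \<le> n + 1"
  shows "X (Suc n) k (x(n:=y)) = max (X n (k-1) x) (min y (X n k x))"
proof -
  have m: "map (x(n:=y)) [0..<n] = map x [0..<n]" by simp
  have "sort (map (x(n:=y)) [0..<Suc n]) = insort y (sort (map x [0..<n]))"
    by (simp only: sort_map_Suc m) simp
  then show ?thesis unfolding X_def
    using ext_insort[OF sorted_sort set_sort_cube[OF x] y, of k] k by simp
qed

lemma X_0: "X n 0 x = 0" by (simp add: X_def oext_def)
lemma X_big: "n < k \<Longrightarrow> X n k x = 1" by (simp add: X_def oext_def)

lemma intJ: "integrable (lebesgue_n n) (\<lambda>x. indicator (unit_cube n) x * (X n k x ^ p * X n l x ^ q))"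
proof (rule int_bound)
  show "(\<lambda>x. X n k x ^ p * X n l x ^ q) \<in> borel_measurable (lebesgue_n n)"
    using meas_X[of n "{..<n}"] by (intro borel_measurable_times borel_measurable_power) auto
  fix x assume "x \<in> unit_cube n"
  then have "0 \<le> X n k x" "X n k x \<le> 1" "0 \<le> X n l x" "X n l x \<le> 1" using X_bounds by auto
  then show "\<bar>X n k x ^ p * X n l x ^ q\<bar> \<le> 1"
    by (simp add: abs_mult power_le_one mult_le_one)
qed

lemma upd_cube:
  assumes "x \<in> space (lebesgue_n n)"
  shows "(x(n:=y) \<in> unit_cube (Suc n)) = (x \<in> unit_cube n \<and> y \<in> {0..1})"
  using assms by (auto simp: space_PiM PiE_iff extensional_def)

lemma fubini_step:
  fixes F :: "(nat \<Rightarrow> real) \<Rightarrow> real" and H :: "(nat \<Rightarrow> real) \<Rightarrow> real"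
  assumes Fm: "F \<in> borel_measurable (lebesgue_n (Suc n))"
    and Fb: "\<And>z. z \<in> unit_cube (Suc n) \<Longrightarrow> \<bar>F z\<bar> \<le> B"
    and H: "\<And>x. x \<in> unit_cube n \<Longrightarrow> (\<integral>y. indicator {0..1} y * F (x(n:=y)) \<partial>lborel) = H x"
  shows "(\<integral>z. indicator (unit_cube (Suc n)) z * F z \<partial>lebesgue_n (Suc n))
         = (\<integral>x. indicator (unit_cube n) x * H x \<partial>lebesgue_n n)"
proof -
  interpret product_sigma_finite "\<lambda>_::nat. lborel :: real measure" by standard
  have eqM: "lebesgue_n (Suc n) = PiM (insert n {..<n}) (\<lambda>_. lborel)" by (simp add: lessThan_Suc)
  have int: "integrable (PiM (insert n {..<n}) (\<lambda>_. lborel)) (\<lambda>z. indicator (unit_cube (Suc n)) z * F z)"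
    using int_bound[OF Fm Fb] eqM by simp
  have "(\<integral>z. indicator (unit_cube (Suc n)) z * F z \<partial>lebesgue_n (Suc n))
      = (\<integral>x. (\<integral>y. indicator (unit_cube (Suc n)) (x(n:=y)) * F (x(n:=y)) \<partial>lborel) \<partial>lebesgue_n n)"
    unfolding eqM by (rule product_integral_insert[OF _ _ int]) auto
  also have "\<dots> = (\<integral>x. indicator (unit_cube n) x * H x \<partial>lebesgue_n n)"
  proof (rule Bochner_Integration.integral_cong[OF refl])
    fix x assume xs: "x \<in> space (lebesgue_n n)"
    have "(\<integral>y. indicator (unit_cube (Suc n)) (x(n:=y)) * F (x(n:=y)) \<partial>lborel)
        = (\<integral>y. indicator (unit_cube n) x * (indicator {0..1} y * F (x(n:=y))) \<partial>lborel)"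
      by (rule Bochner_Integration.integral_cong[OF refl]) (simp add: indicator_def upd_cube[OF xs])
    also have "\<dots> = indicator (unit_cube n) x * (\<integral>y. indicator {0..1} y * F (x(n:=y)) \<partial>lborel)"
      by (rule integral_mult_right_zero)
    also have "\<dots> = indicator (unit_cube n) x * H x"
      by (cases "x \<in> unit_cube n") (simp_all add: H)
    finally show "(\<integral>y. indicator (unit_cube (Suc n)) (x(n:=y)) * F (x(n:=y)) \<partial>lborel)
        = indicator (unit_cube n) x * H x" .
  qed
  finally show ?thesis .
qed


definition Fm :: "nat \<Rightarrow> nat \<Rightarrow> nat \<Rightarrow> nat \<Rightarrow> nat \<Rightarrow> real" where
  "Fm n k l p q = pochhammer (real k) p * pochhammer (real (l+p)) q / pochhammer (real (n+1)) (p+q)"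

lemma poch_Suc_rec: "a + 1 = b \<Longrightarrow> pochhammer (a::real) (Suc m) = a * pochhammer b m"
  by (simp add: pochhammer_rec)

lemma core_S:
  fixes A R N k r :: real
  assumes "N > 0" "R \<noteq> 0" "r \<ge> 0"
  shows "A/R = (k-1)*A/(N*R) + ((k+r)*A/(N*R) - (k-1)*A/(N*R))/(r+1) + (A/(N*R/(N+r)) - (k+r)*A/(N*R))"
proof -
  define u where "u = A/(N*R)"
  have 1: "(k-1)*A/(N*R) = (k-1)*u" by (simp add: u_def)
  have 2: "(k+r)*A/(N*R) = (k+r)*u" by (simp add: u_def)
  have 3: "A/(N*R/(N+r)) = (N+r)*u" using assms by (simp add: u_def field_simps)
  have 4: "((k+r)*u - (k-1)*u)/(r+1) = u"
  proof -
    have "(k+r)*u - (k-1)*u = (r+1)*u" by (simp add: algebra_simps)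
    then show ?thesis using assms by simp
  qed
  have 5: "A/R = N*u" using assms by (simp add: u_def)
  show ?thesis unfolding 1 2 3 4 5 by (simp add: algebra_simps)
qed

lemma core_J:
  fixes A B R N k l p q :: real
  assumes "N > 0" "R \<noteq> 0" "p \<ge> 0" "q \<ge> 0"
  shows "A*B/R = (k-1)*A*B/(N*R) + ((k+p)*A*B/(N*R) - (k-1)*A*B/(N*R))/(p+1)
     + (A*((l-1+p)*B)/(N*R) - (k+p)*A*B/(N*R))
     + (A*((l+p+q)*B)/(N*R) - A*((l-1+p)*B)/(N*R))/(q+1)
     + (A*B/(N*R/(N+(p+q))) - A*((l+p+q)*B)/(N*R))"
proof -
  define u where "u = A*B/(N*R)"
  have 1: "(k-1)*A*B/(N*R) = (k-1)*u" by (simp add: u_def)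
  have 2: "(k+p)*A*B/(N*R) = (k+p)*u" by (simp add: u_def)
  have 3: "A*((l-1+p)*B)/(N*R) = (l-1+p)*u" by (simp add: u_def)
  have 4: "A*((l+p+q)*B)/(N*R) = (l+p+q)*u" by (simp add: u_def)
  have 5: "A*B/(N*R/(N+(p+q))) = (N+(p+q))*u" using assms by (simp add: u_def field_simps)
  have 6: "((k+p)*u - (k-1)*u)/(p+1) = u"
  proof -
    have "(k+p)*u - (k-1)*u = (p+1)*u" by (simp add: algebra_simps)
    then show ?thesis using assms by simp
  qed
  have 7: "((l+p+q)*u - (l-1+p)*u)/(q+1) = u"
  proof -
    have "(l+p+q)*u - (l-1+p)*u = (q+1)*u" by (simp add: algebra_simps)
    then show ?thesis using assms by simp
  qed
  have 8: "A*B/R = N*u" using assms by (simp add: u_def)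
  show ?thesis unfolding 1 2 3 4 5 6 7 8 by (simp add: algebra_simps)
qed

lemma AlgS:
  assumes k: "1 \<le> k"
  shows "Fm (Suc n) k k r 0 = Fm n (k-1) (k-1) (Suc r) 0
     + (Fm n k k (Suc r) 0 - Fm n (k-1) (k-1) (Suc r) 0)/real (Suc r)
     + (Fm n k k r 0 - Fm n k k (Suc r) 0)"
proof -
  define A where "A = pochhammer (real k) r"
  define R where "R = pochhammer (real (Suc n + 1)) r"
  define E where "E = pochhammer (real (n + 1)) r"
  have R0: "R > 0" unfolding R_def by (rule pochhammer_pos) simp
  have h1: "pochhammer (real (k-1)) (Suc r) = real (k-1) * A"
    unfolding A_def by (rule poch_Suc_rec) (use k in simp)
  have h2: "pochhammer (real k) (Suc r) = (real k + real r) * A"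
    unfolding A_def by (rule pochhammer_rec')
  have h3: "pochhammer (real (n+1)) (Suc r) = real (n+1) * R"
    unfolding R_def by (rule poch_Suc_rec) simp
  have h4: "pochhammer (real (n+1)) (Suc r) = (real (n+1) + real r) * E"
    unfolding E_def by (rule pochhammer_rec')
  have hE: "E = real (n+1) * R / (real (n+1) + real r)"
    using h3 h4 by (simp add: field_simps)
  have L: "Fm (Suc n) k k r 0 = A / R" by (simp add: Fm_def A_def R_def)
  have f1: "Fm n (k-1) (k-1) (Suc r) 0 = real (k-1) * A / (real (n+1) * R)"
    using h1 h3 by (simp add: Fm_def)
  have f2: "Fm n k k (Suc r) 0 = (real k + real r) * A / (real (n+1) * R)"
    using h2 h3 by (simp add: Fm_def)
  have f3: "Fm n k k r 0 = A / E" by (simp add: Fm_def A_def E_def)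
  have kk: "real (k-1) = real k - 1" using k by simp
  define N where "N = real (n+1)"
  have N0: "N > 0" "N + real r > 0" "N + real r \<noteq> 0" "N \<noteq> 0" "R \<noteq> 0" unfolding N_def using R0 by auto
  have r0: "real (Suc r) \<noteq> 0" "1 + real r \<noteq> 0" "real r + 1 \<noteq> 0" by simp_all
  have sr: "real (Suc r) = real r + 1" by simp
  show ?thesis unfolding L f1 f2 f3 hE kk N_def[symmetric] sr
    by (rule core_S) (use N0 in auto)
qed

lemma AlgJ:
  assumes k: "1 \<le> k" and kl: "k < l"
  shows "Fm (Suc n) k l p q = Fm n (k-1) (l-1) (Suc p) q
     + (Fm n k (l-1) (Suc p) q - Fm n (k-1) (l-1) (Suc p) q)/real (Suc p)
     + (Fm n k (l-1) p (Suc q) - Fm n k (l-1) (Suc p) q)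
     + (Fm n k l p (Suc q) - Fm n k (l-1) p (Suc q))/real (Suc q)
     + (Fm n k l p q - Fm n k l p (Suc q))"
proof -
  define A where "A = pochhammer (real k) p"
  define B where "B = pochhammer (real (l+p)) q"
  define R where "R = pochhammer (real (Suc n + 1)) (p+q)"
  define E where "E = pochhammer (real (n + 1)) (p+q)"
  have R0: "R > 0" unfolding R_def by (rule pochhammer_pos) simp
  have h1: "pochhammer (real (k-1)) (Suc p) = real (k-1) * A"
    unfolding A_def by (rule poch_Suc_rec) (use k in simp)
  have h2: "pochhammer (real k) (Suc p) = (real k + real p) * A"
    unfolding A_def by (rule pochhammer_rec')
  have h3: "pochhammer (real (n+1)) (Suc (p+q)) = real (n+1) * R"
    unfolding R_def by (rule poch_Suc_rec) simp
  have h4: "pochhammer (real (n+1)) (Suc (p+q)) = (real (n+1) + real (p+q)) * E"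
    unfolding E_def by (rule pochhammer_rec')
  have hE: "E = real (n+1) * R / (real (n+1) + real (p+q))"
    using h3 h4 by (simp add: field_simps)
  have b1: "pochhammer (real (l - 1 + Suc p)) q = B"
    unfolding B_def using kl by (simp add: Suc_diff_1)
  have b2: "pochhammer (real (l - 1 + p)) (Suc q) = real (l - 1 + p) * B"
    unfolding B_def by (rule poch_Suc_rec) (use kl in simp)
  have b3: "pochhammer (real (l + p)) (Suc q) = (real (l+p) + real q) * B"
    unfolding B_def by (rule pochhammer_rec')
  have s1: "Suc p + q = Suc (p+q)" "p + Suc q = Suc (p+q)" by simp_all
  have L: "Fm (Suc n) k l p q = A * B / R" by (simp add: Fm_def A_def B_def R_def)
  have f1: "Fm n (k-1) (l-1) (Suc p) q = real (k-1) * A * B / (real (n+1) * R)"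
    unfolding Fm_def s1 h1 h3 b1 by simp
  have f2: "Fm n k (l-1) (Suc p) q = (real k + real p) * A * B / (real (n+1) * R)"
    unfolding Fm_def s1 h2 h3 b1 by simp
  have f3: "Fm n k (l-1) p (Suc q) = A * (real (l - 1 + p) * B) / (real (n+1) * R)"
    unfolding Fm_def s1 h3 b2 A_def by simp
  have f4: "Fm n k l p (Suc q) = A * ((real (l+p) + real q) * B) / (real (n+1) * R)"
    unfolding Fm_def s1 h3 b3 A_def by simp
  have f5: "Fm n k l p q = A * B / E" by (simp add: Fm_def A_def B_def E_def)
  have kk: "real (k-1) = real k - 1" using k by simp
  have ll: "real (l - 1 + p) = real l - 1 + real p" using kl by simp
  define N where "N = real (n+1)"
  have N0: "N > 0" "N + real (p+q) \<noteq> 0" "N + (real p + real q) \<noteq> 0" "N \<noteq> 0" "R \<noteq> 0" unfolding N_def using R0 by auto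
  have r0: "real (Suc p) \<noteq> 0" "1 + real p \<noteq> 0" "real p + 1 \<noteq> 0"
     "real (Suc q) \<noteq> 0" "1 + real q \<noteq> 0" "real q + 1 \<noteq> 0" by simp_all
  have sr: "real (Suc p) = real p + 1" "real (Suc q) = real q + 1" by simp_all
  have lp: "real (l+p) = real l + real p" "real (p+q) = real p + real q" by simp_all
  show ?thesis unfolding L f1 f2 f3 f4 f5 hE kk ll N_def[symmetric] sr lp
    by (rule core_J) (use N0 in auto)
qed


definition T :: "nat \<Rightarrow> nat \<Rightarrow> nat \<Rightarrow> nat \<Rightarrow> nat \<Rightarrow> (nat \<Rightarrow> real) \<Rightarrow> real" where
  "T m k l p q x = indicator (unit_cube m) x * (X m k x ^ p * X m l x ^ q)"

definition J :: "nat \<Rightarrow> nat \<Rightarrow> nat \<Rightarrow> nat \<Rightarrow> nat \<Rightarrow> real" where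
  "J m k l p q = (\<integral>x. T m k l p q x \<partial>lebesgue_n m)"

lemma intT: "integrable (lebesgue_n m) (T m k l p q)"
  unfolding T_def by (rule intJ)

lemma XX_bound: "x \<in> unit_cube m \<Longrightarrow> \<bar>X m k x ^ p * X m l x ^ q\<bar> \<le> 1"
proof -
  assume "x \<in> unit_cube m"
  then have "0 \<le> X m k x" "X m k x \<le> 1" "0 \<le> X m l x" "X m l x \<le> 1" using X_bounds by auto
  then show ?thesis by (simp add: abs_mult power_le_one mult_le_one)
qed

lemma J_const:
  assumes "\<And>x. x \<in> unit_cube m \<Longrightarrow> X m k x ^ p * X m l x ^ q = c"
  shows "J m k l p q = c"
proof -
  have "J m k l p q = (\<integral>x. indicator (unit_cube m) x * c \<partial>lebesgue_n m)"
    unfolding J_def T_def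
    by (rule Bochner_Integration.integral_cong[OF refl]) (auto simp: indicator_def assms)
  also have "\<dots> = measure (lebesgue_n m) (unit_cube m) * c"
  proof -
    have "unit_cube m \<inter> space (lebesgue_n m) = unit_cube m" by (auto simp: space_PiM PiE_iff)
    then show ?thesis by simp
  qed
  finally show ?thesis by (simp add: cube_measure)
qed

lemma J_cong:
  assumes "\<And>x. x \<in> unit_cube m \<Longrightarrow> X m k x ^ p * X m l x ^ q = X m k' x ^ p' * X m l' x ^ q'"
  shows "J m k l p q = J m k' l' p' q'"
  unfolding J_def T_def
  by (rule Bochner_Integration.integral_cong[OF refl]) (auto simp: indicator_def assms)

lemma J_KK: "J m k k p q = J m k k (p+q) 0"
  by (rule J_cong) (simp add: power_add)

lemma J_top: "J m k (Suc m) p q = J m k k p 0"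
  by (rule J_cong) (simp add: X_big)

lemma J_k0: "J m 0 l 0 q = J m l l q 0"
  by (rule J_cong) simp

lemma J_k0p: "0 < p \<Longrightarrow> J m 0 l p q = 0"
  by (rule J_const) (simp add: X_0)

lemma Fm_KK: "Fm m k k p q = Fm m k k (p+q) 0"
  unfolding Fm_def by (simp add: pochhammer_product')

lemma Fm_top: "Fm m k (Suc m) p q = Fm m k k p 0"
proof -
  have "pochhammer (real (m+1)) (p+q) = pochhammer (real (m+1)) p * pochhammer (real (Suc m + p)) q"
    by (simp add: pochhammer_product' add_ac)
  moreover have "pochhammer (real (Suc m + p)) q \<noteq> 0" by (simp add: pochhammer_eq_0_iff)
  ultimately show ?thesis unfolding Fm_def by simp
qed

lemma Fm_k0: "Fm m 0 l 0 q = Fm m l l q 0"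
  unfolding Fm_def by simp

lemma Fm_k0p: "0 < p \<Longrightarrow> Fm m 0 l p q = 0"
  unfolding Fm_def by (simp add: pochhammer_0_left)

lemma Fm_00: "Fm m 0 0 r 0 = (if r = 0 then 1 else 0)"
  unfolding Fm_def by (simp add: pochhammer_0_left)

lemma Fm_tt: "Fm m (Suc m) (Suc m) r 0 = 1"
proof -
  have "pochhammer (real (Suc m)) r \<noteq> 0" by (simp add: pochhammer_eq_0_iff)
  then show ?thesis unfolding Fm_def by simp
qed

lemma from_single:
  assumes S: "\<And>k r. k \<le> Suc m \<Longrightarrow> J m k k r 0 = Fm m k k r 0"
    and Jt: "\<And>k l p q. 1 \<le> k \<Longrightarrow> k < l \<Longrightarrow> l \<le> m \<Longrightarrow> J m k l p q = Fm m k l p q"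
    and kl: "k \<le> l" "l \<le> Suc m"
  shows "J m k l p q = Fm m k l p q"
proof (cases "k = l")
  case True
  have "J m k k p q = J m k k (p+q) 0" by (rule J_KK)
  also have "\<dots> = Fm m k k (p+q) 0" using S kl True by simp
  also have "\<dots> = Fm m k k p q" by (rule Fm_KK[symmetric])
  finally show ?thesis using True by simp
next
  case False
  then have kl': "k < l" using kl by simp
  show ?thesis
  proof (cases "l = Suc m")
    case True
    have "J m k (Suc m) p q = J m k k p 0" by (rule J_top)
    also have "\<dots> = Fm m k k p 0" using S kl True by simp
    also have "\<dots> = Fm m k (Suc m) p q" by (rule Fm_top[symmetric])
    finally show ?thesis using True by simp
  next
    case lm: False
    show ?thesis
    proof (cases "k = 0")
      case True
      show ?thesis
      proof (cases "p = 0")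
        case True
        have "J m 0 l 0 q = J m l l q 0" by (rule J_k0)
        also have "\<dots> = Fm m l l q 0" using S kl by simp
        also have "\<dots> = Fm m 0 l 0 q" by (rule Fm_k0[symmetric])
        finally show ?thesis using \<open>k = 0\<close> \<open>p = 0\<close> by simp
      next
        case False
        then show ?thesis using \<open>k = 0\<close> J_k0p Fm_k0p by simp
      qed
    next
      case False
      then show ?thesis using Jt[of k l p q] kl' lm kl by simp
    qed
  qed
qed

lemma lin3:
  fixes f1 f2 f3 :: "'a \<Rightarrow> real"
  assumes "integrable M f1" "integrable M f2" "integrable M f3"
  shows "(\<integral>x. f1 x + (f2 x - f1 x)/c + (f3 x - f2 x) \<partial>M)
       = integral\<^sup>L M f1 + (integral\<^sup>L M f2 - integral\<^sup>L M f1)/c + (integral\<^sup>L M f3 - integral\<^sup>L M f2)"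
  using assms by (simp add: Bochner_Integration.integral_add Bochner_Integration.integral_diff integral_divide_zero)

lemma lin5:
  fixes f1 f2 f3 f4 f5 :: "'a \<Rightarrow> real"
  assumes "integrable M f1" "integrable M f2" "integrable M f3" "integrable M f4" "integrable M f5"
  shows "(\<integral>x. f1 x + (f2 x - f1 x)/c + (f3 x - f2 x) + (f4 x - f3 x)/d + (f5 x - f4 x) \<partial>M)
       = integral\<^sup>L M f1 + (integral\<^sup>L M f2 - integral\<^sup>L M f1)/c + (integral\<^sup>L M f3 - integral\<^sup>L M f2)
         + (integral\<^sup>L M f4 - integral\<^sup>L M f3)/d + (integral\<^sup>L M f5 - integral\<^sup>L M f4)"
  using assms by (simp add: Bochner_Integration.integral_add Bochner_Integration.integral_diff integral_divide_zero)


lemma measXX: "(\<lambda>x. X m k x ^ p * X m l x ^ q) \<in> borel_measurable (lebesgue_n m)"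
  using meas_X[of m "{..<m}"] by (intro borel_measurable_times borel_measurable_power) auto

lemma single_step:
  assumes IH: "\<And>k l p q. k \<le> l \<Longrightarrow> l \<le> Suc n \<Longrightarrow> J n k l p q = Fm n k l p q"
    and k: "1 \<le> k" "k \<le> Suc n"
  shows "J (Suc n) k k r 0 = Fm (Suc n) k k r 0"
proof -
  define H where "H x = X n (k-1) x^Suc r + (X n k x^Suc r - X n (k-1) x^Suc r)/real (Suc r)
      + X n k x^r*(1 - X n k x)" for x
  have k1: "1 \<le> k" "k \<le> n + 1" using k by auto
  have "J (Suc n) k k r 0 = (\<integral>x. indicator (unit_cube n) x * H x \<partial>lebesgue_n n)"
    unfolding J_def T_def
  proof (rule fubini_step[where B=1])
    show "(\<lambda>x. X (Suc n) k x ^ r * X (Suc n) k x ^ 0) \<in> borel_measurable (lebesgue_n (Suc n))"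
      by (rule measXX)
    show "\<And>z. z \<in> unit_cube (Suc n) \<Longrightarrow> \<bar>X (Suc n) k z ^ r * X (Suc n) k z ^ 0\<bar> \<le> 1"
      by (rule XX_bound)
    fix x assume x: "x \<in> unit_cube n"
    have ab: "0 \<le> X n (k-1) x" "X n (k-1) x \<le> X n k x" "X n k x \<le> 1"
      using X_bounds[OF x] X_mono[OF x] by auto
    have "(\<integral>y. indicator {0..1} y * (X (Suc n) k (x(n:=y)) ^ r * X (Suc n) k (x(n:=y)) ^ 0) \<partial>lborel)
        = (\<integral>y. indicator {0..1} y * (max (X n (k-1) x) (min y (X n k x)))^r \<partial>lborel)"
      by (rule Bochner_Integration.integral_cong[OF refl]) (auto simp: indicator_def X_upd[OF x _ _ k1])
    also have "\<dots> = H x" unfolding H_def by (rule clamp1_integral[OF ab])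
    finally show "(\<integral>y. indicator {0..1} y * (X (Suc n) k (x(n:=y)) ^ r * X (Suc n) k (x(n:=y)) ^ 0) \<partial>lborel) = H x" .
  qed
  also have "\<dots> = (\<integral>x. T n (k-1) (k-1) (Suc r) 0 x + (T n k k (Suc r) 0 x - T n (k-1) (k-1) (Suc r) 0 x)/real (Suc r)
        + (T n k k r 0 x - T n k k (Suc r) 0 x) \<partial>lebesgue_n n)"
  proof (rule Bochner_Integration.integral_cong[OF refl])
    fix x
    show "indicator (unit_cube n) x * H x = T n (k-1) (k-1) (Suc r) 0 x + (T n k k (Suc r) 0 x - T n (k-1) (k-1) (Suc r) 0 x)/real (Suc r)
        + (T n k k r 0 x - T n k k (Suc r) 0 x)"
      unfolding T_def H_def by (cases "x \<in> unit_cube n") (simp_all add: algebra_simps)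
  qed
  also have "\<dots> = J n (k-1) (k-1) (Suc r) 0 + (J n k k (Suc r) 0 - J n (k-1) (k-1) (Suc r) 0)/real (Suc r)
        + (J n k k r 0 - J n k k (Suc r) 0)"
    unfolding J_def by (rule lin3[OF intT intT intT])
  also have "\<dots> = Fm n (k-1) (k-1) (Suc r) 0 + (Fm n k k (Suc r) 0 - Fm n (k-1) (k-1) (Suc r) 0)/real (Suc r)
        + (Fm n k k r 0 - Fm n k k (Suc r) 0)"
    using IH k by simp
  also have "\<dots> = Fm (Suc n) k k r 0" by (rule AlgS[OF k(1), symmetric])
  finally show ?thesis .
qed

lemma joint_step:
  assumes IH: "\<And>k l p q. k \<le> l \<Longrightarrow> l \<le> Suc n \<Longrightarrow> J n k l p q = Fm n k l p q"
    and k: "1 \<le> k" "k < l" "l \<le> Suc n"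
  shows "J (Suc n) k l p q = Fm (Suc n) k l p q"
proof -
  define H where "H x = X n (k-1) x^Suc p*X n (l-1) x^q
      + X n (l-1) x^q*((X n k x^Suc p - X n (k-1) x^Suc p)/real (Suc p))
      + X n k x^p*X n (l-1) x^q*(X n (l-1) x - X n k x)
      + X n k x^p*((X n l x^Suc q - X n (l-1) x^Suc q)/real (Suc q))
      + X n k x^p*X n l x^q*(1 - X n l x)" for x
  have k1: "1 \<le> k" "k \<le> n + 1" and l1: "1 \<le> l" "l \<le> n + 1" using k by auto
  have "J (Suc n) k l p q = (\<integral>x. indicator (unit_cube n) x * H x \<partial>lebesgue_n n)"
    unfolding J_def T_def
  proof (rule fubini_step[where B=1])
    show "(\<lambda>x. X (Suc n) k x ^ p * X (Suc n) l x ^ q) \<in> borel_measurable (lebesgue_n (Suc n))"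
      by (rule measXX)
    show "\<And>z. z \<in> unit_cube (Suc n) \<Longrightarrow> \<bar>X (Suc n) k z ^ p * X (Suc n) l z ^ q\<bar> \<le> 1"
      by (rule XX_bound)
    fix x assume x: "x \<in> unit_cube n"
    have ab: "0 \<le> X n (k-1) x" "X n (k-1) x \<le> X n k x" "X n k x \<le> X n (l-1) x"
       "X n (l-1) x \<le> X n l x" "X n l x \<le> 1"
      using X_bounds[OF x] X_mono[OF x] k by auto
    have "(\<integral>y. indicator {0..1} y * (X (Suc n) k (x(n:=y)) ^ p * X (Suc n) l (x(n:=y)) ^ q) \<partial>lborel)
        = (\<integral>y. indicator {0..1} y * ((max (X n (k-1) x) (min y (X n k x)))^p
              * (max (X n (l-1) x) (min y (X n l x)))^q) \<partial>lborel)"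
      by (rule Bochner_Integration.integral_cong[OF refl])
         (auto simp: indicator_def X_upd[OF x _ _ k1] X_upd[OF x _ _ l1])
    also have "\<dots> = H x" unfolding H_def by (rule clamp2_integral[OF ab])
    finally show "(\<integral>y. indicator {0..1} y * (X (Suc n) k (x(n:=y)) ^ p * X (Suc n) l (x(n:=y)) ^ q) \<partial>lborel) = H x" .
  qed
  also have "\<dots> = (\<integral>x. T n (k-1) (l-1) (Suc p) q x + (T n k (l-1) (Suc p) q x - T n (k-1) (l-1) (Suc p) q x)/real (Suc p)
        + (T n k (l-1) p (Suc q) x - T n k (l-1) (Suc p) q x)
        + (T n k l p (Suc q) x - T n k (l-1) p (Suc q) x)/real (Suc q)
        + (T n k l p q x - T n k l p (Suc q) x) \<partial>lebesgue_n n)"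
  proof (rule Bochner_Integration.integral_cong[OF refl])
    fix x
    show "indicator (unit_cube n) x * H x = T n (k-1) (l-1) (Suc p) q x + (T n k (l-1) (Suc p) q x - T n (k-1) (l-1) (Suc p) q x)/real (Suc p)
        + (T n k (l-1) p (Suc q) x - T n k (l-1) (Suc p) q x)
        + (T n k l p (Suc q) x - T n k (l-1) p (Suc q) x)/real (Suc q)
        + (T n k l p q x - T n k l p (Suc q) x)"
      unfolding T_def H_def by (cases "x \<in> unit_cube n") (simp_all add: algebra_simps)
  qed
  also have "\<dots> = J n (k-1) (l-1) (Suc p) q + (J n k (l-1) (Suc p) q - J n (k-1) (l-1) (Suc p) q)/real (Suc p)
        + (J n k (l-1) p (Suc q) - J n k (l-1) (Suc p) q)
        + (J n k l p (Suc q) - J n k (l-1) p (Suc q))/real (Suc q)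
        + (J n k l p q - J n k l p (Suc q))"
    unfolding J_def by (rule lin5[OF intT intT intT intT intT])
  also have "\<dots> = Fm n (k-1) (l-1) (Suc p) q + (Fm n k (l-1) (Suc p) q - Fm n (k-1) (l-1) (Suc p) q)/real (Suc p)
        + (Fm n k (l-1) p (Suc q) - Fm n k (l-1) (Suc p) q)
        + (Fm n k l p (Suc q) - Fm n k (l-1) p (Suc q))/real (Suc q)
        + (Fm n k l p q - Fm n k l p (Suc q))"
  proof -
    have "J n (k-1) (l-1) (Suc p) q = Fm n (k-1) (l-1) (Suc p) q" by (rule IH) (use k in auto)
    moreover have "J n k (l-1) (Suc p) q = Fm n k (l-1) (Suc p) q" by (rule IH) (use k in auto)
    moreover have "J n k (l-1) p (Suc q) = Fm n k (l-1) p (Suc q)" by (rule IH) (use k in auto)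
    moreover have "J n k l p (Suc q) = Fm n k l p (Suc q)" by (rule IH) (use k in auto)
    moreover have "J n k l p q = Fm n k l p q" by (rule IH) (use k in auto)
    ultimately show ?thesis by simp
  qed
  also have "\<dots> = Fm (Suc n) k l p q" by (rule AlgJ[OF k(1,2), symmetric])
  finally show ?thesis .
qed

lemma J_Fm: "k \<le> l \<Longrightarrow> l \<le> Suc n \<Longrightarrow> J n k l p q = Fm n k l p q"
proof (induction n arbitrary: k l p q)
  case 0
  show ?case
  proof (rule from_single[OF _ _ 0])
    fix k r :: nat assume "k \<le> Suc 0"
    then consider "k = 0" | "k = 1" by linarith
    then show "J 0 k k r 0 = Fm 0 k k r 0"
    proof cases
      case 1
      have "J 0 k k r 0 = 0 ^ r" by (rule J_const) (simp add: 1 X_0)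
      then show ?thesis using 1 by (simp add: Fm_00)
    next
      case 2
      have "J 0 k k r 0 = 1" by (rule J_const) (simp add: 2 X_big)
      then show ?thesis using 2 Fm_tt[of 0 r] by simp
    qed
  qed auto
next
  case (Suc n)
  show ?case
  proof (rule from_single[OF _ _ Suc.prems])
    fix k r :: nat assume kk: "k \<le> Suc (Suc n)"
    show "J (Suc n) k k r 0 = Fm (Suc n) k k r 0"
    proof (cases "k = 0")
      case True
      have "J (Suc n) k k r 0 = 0 ^ r" by (rule J_const) (simp add: True X_0)
      then show ?thesis using True by (simp add: Fm_00)
    next
      case k0: False
      show ?thesis
      proof (cases "k = Suc (Suc n)")
        case True
        have "J (Suc n) k k r 0 = 1" by (rule J_const) (simp add: True X_big)
        then show ?thesis using True Fm_tt[of "Suc n" r] by simp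
      next
        case False
        show ?thesis by (rule single_step[OF Suc.IH]) (use k0 False kk in auto)
      qed
    qed
  next
    fix k l p q :: nat assume "1 \<le> k" "k < l" "l \<le> Suc n"
    then show "J (Suc n) k l p q = Fm (Suc n) k l p q"
      using joint_step[of n k l p q] Suc.IH by blast
  qed
qed


lemma os_ext_X: "1 \<le> i \<Longrightarrow> os_ext n i x = X n i x"
  by (simp add: os_ext_def os_def X_def oext_def)

lemma poch2: "pochhammer (x::real) 2 = x * (x + 1)"
  by (simp add: pochhammer_Suc numeral_2_eq_2)

lemma Fm11: "Fm n i j 1 1 = real i * (real j + 1) / ((real n + 1) * (real n + 2))"
proof -
  have p1: "pochhammer (real i) 1 = real i" by simp
  have p2: "pochhammer (real (j + 1)) 1 = real j + 1" by simp
  have p3: "pochhammer (real (n + 1)) (1 + 1) = (real n + 1) * (real n + 2)"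
    by (simp add: pochhammer_Suc numeral_2_eq_2 algebra_simps)
  show ?thesis unfolding Fm_def p1 p2 p3 by simp
qed

lemma J_swap: "J n i j 1 1 = J n j i 1 1"
  by (rule J_cong) simp

lemma entry1:
  assumes "1 \<le> i" "i \<le> n+1" "1 \<le> j" "j \<le> n+1"
  shows "os_moment_mat n $$ (i-1, j-1) = real (min i j) * (real (max i j) + 1) / ((real n + 1) * (real n + 2))"
proof -
  have oi: "os_ext n i x = X n i x" for x using assms(1) by (rule os_ext_X)
  have oj: "os_ext n j x = X n j x" for x using assms(3) by (rule os_ext_X)
  have "os_moment_mat n $$ (i-1, j-1) = (\<integral>x\<in>unit_cube n. os_ext n i x * os_ext n j x \<partial>lebesgue_n n)"
    unfolding os_moment_mat_def using assms by simp
  also have "\<dots> = J n i j 1 1"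
    unfolding set_lebesgue_integral_def J_def T_def
    by (rule Bochner_Integration.integral_cong[OF refl]) (simp add: oi oj)
  also have "\<dots> = real (min i j) * (real (max i j) + 1) / ((real n + 1) * (real n + 2))"
  proof (cases "i \<le> j")
    case True
    have "J n i j 1 1 = Fm n i j 1 1" using assms True by (intro J_Fm) auto
    also have "\<dots> = real i * (real j + 1) / ((real n + 1) * (real n + 2))" by (rule Fm11)
    finally show ?thesis using True by (simp add: min_def max_def)
  next
    case False
    have "J n i j 1 1 = J n j i 1 1" by (rule J_swap)
    also have "\<dots> = Fm n j i 1 1" using assms False by (intro J_Fm) auto
    also have "\<dots> = real j * (real i + 1) / ((real n + 1) * (real n + 2))" by (rule Fm11)
    finally show ?thesis using False by (simp add: min_def max_def)
  qed
  finally show ?thesis .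
qed

lemma entry0:
  assumes "a < n+1" "b < n+1"
  shows "os_moment_mat n $$ (a, b) = (real (min a b) + 1) * (real (max a b) + 2) / ((real n + 1) * (real n + 2))"
  using entry1[of "a+1" n "b+1"] assms by (simp add: algebra_simps)

definition tt :: "nat \<Rightarrow> nat \<Rightarrow> nat \<Rightarrow> real" where
  "tt n k j = (if k = j \<and> k < n then 2 else if k = j \<and> k = n then (real n + 1) / (real n + 2)
     else if k = j + 1 \<or> j = k + 1 then -1 else 0)"

definition Tm :: "nat \<Rightarrow> real mat" where
  "Tm n = mat (n+1) (n+1) (\<lambda>(k,j). (real n + 1) * (real n + 2) * tt n k j)"

lemma tri_sum:
  fixes g :: "nat \<Rightarrow> real"
  assumes "b < N"
  shows "(\<Sum>k\<in>{0..<N}. g k * (if k = b then \<alpha> else if k = b + 1 \<or> b = k + 1 then -1 else 0))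
       = \<alpha> * g b - (if 0 < b then g (b-1) else 0) - (if b + 1 < N then g (b+1) else 0)"
proof -
  have e: "(\<lambda>k. g k * (if k = b then \<alpha> else if k = b + 1 \<or> b = k + 1 then -1 else 0)) =
     (\<lambda>k. (if k = b then \<alpha> * g b else 0) + (if k = b - 1 then (if 0 < b then - g (b-1) else 0) else 0)
        + (if k = b+1 then - g (b+1) else 0))"
    by (rule ext) auto
  have "(\<Sum>k\<in>{0..<N}. (if k = b then \<alpha> * g b else 0) + (if k = b - 1 then (if 0 < b then - g (b-1) else 0) else 0)
        + (if k = b+1 then - g (b+1) else 0))
      = (\<Sum>k\<in>{0..<N}. (if k = b then \<alpha> * g b else 0)) + (\<Sum>k\<in>{0..<N}. (if k = b - 1 then (if 0 < b then - g (b-1) else 0) else 0))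
        + (\<Sum>k\<in>{0..<N}. (if k = b+1 then - g (b+1) else 0))"
    by (simp add: sum.distrib)
  also have "\<dots> = \<alpha> * g b - (if 0 < b then g (b-1) else 0) - (if b + 1 < N then g (b+1) else 0)"
    using assms by (simp add: sum.delta) (use assms in linarith)
  finally show ?thesis unfolding e .
qed

lemma MT:
  assumes n: "n \<ge> 1"
  shows "os_moment_mat n * Tm n = 1\<^sub>m (n+1)"
proof (rule eq_matI)
  show "dim_row (os_moment_mat n * Tm n) = dim_row (1\<^sub>m (n+1))" by (simp add: os_moment_mat_def)
  show "dim_col (os_moment_mat n * Tm n) = dim_col (1\<^sub>m (n+1))" by (simp add: Tm_def)
  fix a b assume "a < dim_row (1\<^sub>m (n+1))" "b < dim_col (1\<^sub>m (n+1))"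
  then have a: "a < n+1" and b: "b < n+1" by auto
  define c where "c = (real n + 1) * (real n + 2)"
  have c0: "c \<noteq> 0" unfolding c_def by simp
  define \<alpha> where "\<alpha> = (if b < n then 2 else (real n + 1) / (real n + 2))"
  define g where "g k = (real (min a k) + 1) * (real (max a k) + 2)" for k
  have "(os_moment_mat n * Tm n) $$ (a, b) = (\<Sum>k\<in>{0..<n+1}. os_moment_mat n $$ (a,k) * Tm n $$ (k,b))"
    using a b by (simp add: os_moment_mat_def Tm_def scalar_prod_def)
  also have "\<dots> = (\<Sum>k\<in>{0..<n+1}. g k * (if k = b then \<alpha> else if k = b + 1 \<or> b = k + 1 then -1 else 0))"
  proof (rule sum.cong[OF refl])
    fix k assume "k \<in> {0..<n+1}"
    then have k: "k < n+1" by simp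
    have "tt n k b = (if k = b then \<alpha> else if k = b + 1 \<or> b = k + 1 then -1 else 0)"
      unfolding tt_def \<alpha>_def using b by auto
    then show "os_moment_mat n $$ (a,k) * Tm n $$ (k,b) = g k * (if k = b then \<alpha> else if k = b + 1 \<or> b = k + 1 then -1 else 0)"
      using a b k c0 by (simp add: entry0 Tm_def g_def c_def[symmetric])
  qed
  also have "\<dots> = \<alpha> * g b - (if 0 < b then g (b-1) else 0) - (if b + 1 < n+1 then g (b+1) else 0)"
    by (rule tri_sum) (use b in simp)
  also have "\<dots> = 1\<^sub>m (n+1) $$ (a,b)"
  proof (cases "b < n")
    case bn: True
    have \<alpha>2: "\<alpha> = 2" using bn by (simp add: \<alpha>_def)
    show ?thesis
    proof (cases "a = b")
      case True
      show ?thesis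
      proof (cases "b = 0")
        case True then show ?thesis using \<open>a = b\<close> bn a b by (simp add: \<alpha>2 g_def)
      next
        case False
        then have "real (b - 1) = real b - 1" by simp
        then show ?thesis using \<open>a = b\<close> bn a b False by (simp add: \<alpha>2 g_def algebra_simps)
      qed
    next
      case False
      show ?thesis
      proof (cases "a < b")
        case True
        then have "real (b - 1) = real b - 1" "min a (b-1) = a" "max a (b-1) = b - 1" by auto
        then show ?thesis using True bn a b by (simp add: \<alpha>2 g_def algebra_simps)
      next
        case False
        then have ab: "b < a" using \<open>a \<noteq> b\<close> by simp
        show ?thesis
        proof (cases "b = 0")
          case True then show ?thesis using ab bn a b by (simp add: \<alpha>2 g_def algebra_simps)
        next
          case False
          then have "real (b - 1) = real b - 1" "min a (b-1) = b - 1" "max a (b-1) = a" using ab by auto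
          then show ?thesis using ab bn a b False by (simp add: \<alpha>2 g_def algebra_simps)
        qed
      qed
    qed
  next
    case False
    then have bn: "b = n" using b by simp
    have b0: "0 < b" using bn n by simp
    have "real (b - 1) = real b - 1" using b0 by simp
    show ?thesis
    proof (cases "a = n")
      case True
      have "\<alpha> * g b = (real n + 1) * (real n + 1)" using True bn by (simp add: \<alpha>_def g_def field_simps)
      moreover have "g (b - 1) = real n * (real n + 2)"
      proof -
        have "min a (b-1) = n - 1" "max a (b-1) = n" using True bn b0 by auto
        moreover have "real (n - 1) = real n - 1" using b0 bn by simp
        ultimately show ?thesis by (simp add: g_def algebra_simps)
      qed
      ultimately show ?thesis using True bn b0 a by (simp add: algebra_simps)
    next
      case False
      then have an: "a < n" using a by simp
      have "\<alpha> * g b = (real a + 1) * (real n + 1)" using an bn by (simp add: \<alpha>_def g_def field_simps)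
      moreover have "g (b - 1) = (real a + 1) * (real n + 1)"
      proof -
        have "min a (b-1) = a" "max a (b-1) = n - 1" using an bn b0 by auto
        moreover have "real (n - 1) = real n - 1" using b0 bn by simp
        ultimately show ?thesis by (simp add: g_def algebra_simps)
      qed
      ultimately show ?thesis using an bn b0 a by simp
    qed
  qed
  finally show "(os_moment_mat n * Tm n) $$ (a, b) = 1\<^sub>m (n+1) $$ (a,b)" .
qed


theorem lemma1:
  fixes n :: nat
  assumes "n \<ge> 1"
  shows "(\<forall>i\<in>{1..n+1}. \<forall>j\<in>{1..n+1}.
            os_moment_mat n $$ (i-1, j-1)
              = real (min i j) * (real (max i j) + 1) / ((real n + 1) * (real n + 2)))
       \<and> invertible_mat (os_moment_mat n)
       \<and> (\<forall>B \<in> carrier_mat (n+1) (n+1).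
            inverts_mat (os_moment_mat n) B \<and> inverts_mat B (os_moment_mat n) \<longrightarrow>
            (\<forall>i\<in>{1..n+1}. \<forall>j\<in>{1..n+1}.
               B $$ (i-1, j-1) / ((real n + 1) * (real n + 2)) =
                 (if i = j \<and> i < n+1 then 2
                  else if i = j \<and> i = n+1 then (real n + 1) / (real n + 2)
                  else if i = j + 1 \<or> j = i + 1 then -1
                  else 0)))"
proof (intro conjI)
  have Mc: "os_moment_mat n \<in> carrier_mat (n+1) (n+1)" by (simp add: os_moment_mat_def)
  have Tc: "Tm n \<in> carrier_mat (n+1) (n+1)" by (simp add: Tm_def)
  have MT: "os_moment_mat n * Tm n = 1\<^sub>m (n+1)" by (rule MT[OF assms])
  have TM: "Tm n * os_moment_mat n = 1\<^sub>m (n+1)" by (rule mat_mult_left_right_inverse[OF Mc Tc MT])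
  show "\<forall>i\<in>{1..n+1}. \<forall>j\<in>{1..n+1}.
            os_moment_mat n $$ (i-1, j-1)
              = real (min i j) * (real (max i j) + 1) / ((real n + 1) * (real n + 2))"
    using entry1 by auto
  show "invertible_mat (os_moment_mat n)"
    unfolding invertible_mat_def inverts_mat_def
  proof (intro conjI exI)
    show "square_mat (os_moment_mat n)" using Mc by simp
    show "os_moment_mat n * Tm n = 1\<^sub>m (dim_row (os_moment_mat n))" using MT Mc by simp
    show "Tm n * os_moment_mat n = 1\<^sub>m (dim_row (Tm n))" using TM Tc by simp
  qed
  show "\<forall>B \<in> carrier_mat (n+1) (n+1).
            inverts_mat (os_moment_mat n) B \<and> inverts_mat B (os_moment_mat n) \<longrightarrow>
            (\<forall>i\<in>{1..n+1}. \<forall>j\<in>{1..n+1}.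
               B $$ (i-1, j-1) / ((real n + 1) * (real n + 2)) =
                 (if i = j \<and> i < n+1 then 2
                  else if i = j \<and> i = n+1 then (real n + 1) / (real n + 2)
                  else if i = j + 1 \<or> j = i + 1 then -1
                  else 0))"
  proof (intro ballI impI)
    fix B i j assume Bc: "B \<in> carrier_mat (n+1) (n+1)"
      and inv: "inverts_mat (os_moment_mat n) B \<and> inverts_mat B (os_moment_mat n)"
      and i: "i \<in> {1..n+1}" and j: "j \<in> {1..n+1}"
    have BM: "B * os_moment_mat n = 1\<^sub>m (n+1)" using inv Bc unfolding inverts_mat_def by simp
    have "B = B * 1\<^sub>m (n+1)" using Bc by simp
    also have "\<dots> = B * (os_moment_mat n * Tm n)" using MT by simp
    also have "\<dots> = (B * os_moment_mat n) * Tm n" using Bc Mc Tc by (simp add: assoc_mult_mat)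
    also have "\<dots> = Tm n" using BM Tc by simp
    finally have BT: "B = Tm n" .
    have c0: "(real n + 1) * (real n + 2) \<noteq> 0" by simp
    have "B $$ (i-1, j-1) = (real n + 1) * (real n + 2) * tt n (i-1) (j-1)"
      using i j unfolding BT Tm_def by auto
    then have "B $$ (i-1, j-1) / ((real n + 1) * (real n + 2)) = tt n (i-1) (j-1)"
      using c0 by simp
    also have "\<dots> = (if i = j \<and> i < n+1 then 2
                  else if i = j \<and> i = n+1 then (real n + 1) / (real n + 2)
                  else if i = j + 1 \<or> j = i + 1 then -1
                  else 0)"
    proof -
      obtain i' j' where ij: "i = Suc i'" "j = Suc j'" using i j by (cases i; cases j) auto
      have "i' \<le> n" "j' \<le> n" using i j ij by auto
      then show ?thesis unfolding ij tt_def by simp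
    qed
    finally show "B $$ (i-1, j-1) / ((real n + 1) * (real n + 2)) =
                 (if i = j \<and> i < n+1 then 2
                  else if i = j \<and> i = n+1 then (real n + 1) / (real n + 2)
                  else if i = j + 1 \<or> j = i + 1 then -1
                  else 0)" .
  qed
qed

end
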